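(* Let $S$ be a countable set and $(Y_k,Z_k)_{k\ge0}$ a process with values in $S\times\mathbb R_+$ satisfying the following property (M1): for all $k\ge1$, $y\in S$ and measurable $A\subseteq\mathbb R_+$, $$\mathbb P\bigl(Y_k=y,Z_k\in A\mid Y_{k-1},Z_{k-1},\dots,Y_0,Z_0\bigr)=\mathbb P\bigl(Y_1'=y,Z_1'\in A\mid Y_0'=Y_{k-1}\bigr),$$ where $(Y'_k,Z'_k)$ is an independent copy of the process (so the one-step transition from time $k-1$ depends on the past only through $Y_{k-1}$). Write $\mathbb E_u[\cdot]=\mathbb E[\cdot\mid Y_0=u]$. Suppose there exist $\alpha\in(0,1]$ and $\theta>0$ with $\mathbb E[e^{\theta Z_0^\alpha}]<\infty$ and $M:=\sup_{u\in S}\mathbb E_u[e^{\theta Z_1^\alpha}]<\infty$. Then for all $k\ge0$, $$\mathbb E\Bigl[e^{\theta\left(\sum_{i=0}^kZ_i\right)^\alpha}\Bigr]\le M^k\,\mathbb E\bigl[e^{\theta Z_0^\alpha}\bigr].$$ Consequently there exist $C,C'>0$ depending only on $\theta$, $\mathbb E[e^{\theta Z_0^\alpha}]$ and $M$ such that for all $k\ge0$, $$\mathbb P\Bigl(\sum_{i=0}^kZ_i>Ck^{1/\alpha}\Bigr)\le e^{-C'k}.$$ *)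

theory Defs
  imports "HOL-Probability.Probability"
begin

definition past_alg :: "'a measure \<Rightarrow> (nat \<Rightarrow> 'a \<Rightarrow> 's) \<Rightarrow> (nat \<Rightarrow> 'a \<Rightarrow> real) \<Rightarrow> nat \<Rightarrow> 'a measure" where
  "past_alg P Y Z k =
     vimage_algebra (space P) (\<lambda>\<omega>. \<lambda>i\<in>{..<k}. (Y i \<omega>, Z i \<omega>))
       (PiM {..<k} (\<lambda>_. count_space UNIV \<Otimes>\<^sub>M (borel :: real measure)))"

text \<open>Standing setting: (Y_k,Z_k) with values in S x R_+ (S = the countable type 's),
  satisfying (M1) with one-step transition law K u = law of (Y_1,Z_1) for the process started at u.\<close>
definition M1_setting ::
  "'a measure \<Rightarrow> (nat \<Rightarrow> 'a \<Rightarrow> 's::countable) \<Rightarrow> (nat \<Rightarrow> 'a \<Rightarrow> real) \<Rightarrow> ('s \<Rightarrow> ('s \<times> real) measure) \<Rightarrow> bool" where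
  "M1_setting P Y Z K \<longleftrightarrow>
     prob_space P \<and>
     (\<forall>k. Y k \<in> measurable P (count_space UNIV)) \<and>
     (\<forall>k. Z k \<in> borel_measurable P) \<and>
     (\<forall>k. \<forall>\<omega>\<in>space P. 0 \<le> Z k \<omega>) \<and>
     (\<forall>u. prob_space (K u) \<and> sets (K u) = sets (count_space UNIV \<Otimes>\<^sub>M (borel :: real measure))) \<and>
     (\<forall>k\<ge>1. \<forall>y. \<forall>A\<in>sets (borel :: real measure).
        AE \<omega> in P. real_cond_exp P (past_alg P Y Z k)
                       (indicator {\<omega>\<in>space P. Y k \<omega> = y \<and> Z k \<omega> \<in> A}) \<omega>
                   = measure (K (Y (k - 1) \<omega>)) ({y} \<times> A))"

definition E0 :: "'a measure \<Rightarrow> (nat \<Rightarrow> 'a \<Rightarrow> real) \<Rightarrow> real \<Rightarrow> real \<Rightarrow> ennreal" where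
  "E0 P Z \<theta> \<alpha> = (\<integral>\<^sup>+ \<omega>. ennreal (exp (\<theta> * Z 0 \<omega> powr \<alpha>)) \<partial>P)"

definition Msup :: "('s \<Rightarrow> ('s \<times> real) measure) \<Rightarrow> real \<Rightarrow> real \<Rightarrow> ennreal" where
  "Msup K \<theta> \<alpha> = (SUP u. \<integral>\<^sup>+ x. ennreal (exp (\<theta> * snd x powr \<alpha>)) \<partial>K u)"

end

theory Submission
  imports Defs
begin

lemma powr_subadd:
  fixes a b \<alpha> :: real
  assumes "0 \<le> a" "0 \<le> b" "0 < \<alpha>" "\<alpha> \<le> 1"
  shows "(a + b) powr \<alpha> \<le> a powr \<alpha> + b powr \<alpha>"
proof (cases "a + b = 0")
  case True then show ?thesis using assms by simp
next
  case False
  then have s: "0 < a + b" using assms by simp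
  have ha: "a / (a+b) \<le> (a/(a+b)) powr \<alpha>"
  proof -
    have "0 \<le> a/(a+b)" "a/(a+b) \<le> 1" using assms s by auto
    then show ?thesis using assms
      by (metis powr_mono' powr_one_gt_zero_iff powr_one powr_zero_eq_one zero_le_one order.strict_iff_order)
  qed
  have hb: "b / (a+b) \<le> (b/(a+b)) powr \<alpha>"
  proof -
    have "0 \<le> b/(a+b)" "b/(a+b) \<le> 1" using assms s by auto
    then show ?thesis using assms
      by (metis powr_mono' powr_one_gt_zero_iff powr_one powr_zero_eq_one zero_le_one order.strict_iff_order)
  qed
  have "1 = a/(a+b) + b/(a+b)" using s by (simp add: add_divide_distrib[symmetric])
  also have "\<dots> \<le> (a/(a+b)) powr \<alpha> + (b/(a+b)) powr \<alpha>" using ha hb by simp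
  also have "\<dots> = (a powr \<alpha> + b powr \<alpha>) / (a+b) powr \<alpha>"
    using assms s by (simp add: powr_divide add_divide_distrib)
  finally show ?thesis using s by (simp add: field_simps)
qed

lemma M1_facts:
  assumes "M1_setting P Y Z K"
  shows "prob_space P" "\<And>k. Y k \<in> measurable P (count_space UNIV)"
    "\<And>k. Z k \<in> borel_measurable P" "\<And>k \<omega>. \<omega> \<in> space P \<Longrightarrow> 0 \<le> Z k \<omega>"
    "\<And>u. prob_space (K u)" "\<And>u. sets (K u) = sets (count_space UNIV \<Otimes>\<^sub>M (borel :: real measure))"
    "\<And>k y A. k \<ge> 1 \<Longrightarrow> A \<in> sets (borel :: real measure) \<Longrightarrow>
        AE \<omega> in P. real_cond_exp P (past_alg P Y Z k)
                       (indicator {\<omega>\<in>space P. Y k \<omega> = y \<and> Z k \<omega> \<in> A}) \<omega>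
                   = measure (K (Y (k - 1) \<omega>)) ({y} \<times> A)"
  using assms unfolding M1_setting_def by auto

lemma past_meas:
  assumes "M1_setting P Y Z K"
  shows "(\<lambda>\<omega>. \<lambda>i\<in>{..<k}. (Y i \<omega>, Z i \<omega>)) \<in> measurable P
           (PiM {..<k} (\<lambda>_. count_space UNIV \<Otimes>\<^sub>M (borel :: real measure)))"
proof -
  note M1_facts[OF assms]
  then show ?thesis
    by (intro measurable_restrict) (auto intro!: measurable_Pair)
qed

lemma past_subalg:
  assumes "M1_setting P Y Z K"
  shows "sigma_finite_subalgebra P (past_alg P Y Z k)"
proof -
  interpret prob_space P using M1_facts[OF assms] by simp
  let ?g = "(\<lambda>\<omega>. \<lambda>i\<in>{..<k}. (Y i \<omega>, Z i \<omega>))"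
  let ?N = "PiM {..<k} (\<lambda>_. count_space UNIV \<Otimes>\<^sub>M (borel :: real measure))"
  have g: "?g \<in> measurable P ?N" by (rule past_meas[OF assms])
  have "subalgebra P (past_alg P Y Z k)"
    unfolding subalgebra_def past_alg_def
  proof
    show "space (vimage_algebra (space P) ?g ?N) = space P" by simp
    have "?g \<in> space P \<rightarrow> space ?N" using g by (simp add: measurable_def)
    then show "sets (vimage_algebra (space P) ?g ?N) \<subseteq> sets P"
      using g by (auto simp: sets_vimage_algebra2 intro: measurable_sets)
  qed
  then have "finite_measure_subalgebra P (past_alg P Y Z k)"
    by (simp add: finite_measure_subalgebra_def finite_measure_subalgebra_axioms_def finite_measure_axioms)
  then show ?thesis by (rule finite_measure_subalgebra_is_sigma_finite)
qed

lemma F_past_meas: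
  assumes "M1_setting P Y Z K"
  shows "(\<lambda>\<omega>. exp (\<theta> * (\<Sum>i\<le>n. Z i \<omega>) powr \<alpha>)) \<in> borel_measurable (past_alg P Y Z (Suc n))"
proof -
  let ?g = "(\<lambda>\<omega>. \<lambda>i\<in>{..<Suc n}. (Y i \<omega>, Z i \<omega>))"
  let ?N = "PiM {..<Suc n} (\<lambda>_. count_space UNIV \<Otimes>\<^sub>M (borel :: real measure))"
  have g: "?g \<in> measurable P ?N" by (rule past_meas[OF assms])
  have "?g \<in> space P \<rightarrow> space ?N" using g by (simp add: measurable_def)
  then have g2: "?g \<in> measurable (past_alg P Y Z (Suc n)) ?N"
    unfolding past_alg_def by (rule measurable_vimage_algebra1)
  have h: "(\<lambda>x. exp (\<theta> * (\<Sum>i<Suc n. snd (x i)) powr \<alpha>)) \<in> borel_measurable ?N"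
  proof -
    have "\<And>i. i \<in> {..<Suc n} \<Longrightarrow> (\<lambda>x. snd (x i)) \<in> borel_measurable ?N"
      by (rule measurable_compose[OF measurable_component_singleton]) auto
    then show ?thesis by measurable
  qed
  have "(\<lambda>\<omega>. (\<lambda>x. exp (\<theta> * (\<Sum>i<Suc n. snd (x i)) powr \<alpha>)) (?g \<omega>)) \<in> borel_measurable (past_alg P Y Z (Suc n))"
    by (rule measurable_compose[OF g2 h])
  moreover have "\<And>\<omega>. (\<lambda>x. exp (\<theta> * (\<Sum>i<Suc n. snd (x i)) powr \<alpha>)) (?g \<omega>) = exp (\<theta> * (\<Sum>i\<le>n. Z i \<omega>) powr \<alpha>)"
  proof -
    fix \<omega>
    have "(\<Sum>i<Suc n. snd (?g \<omega> i)) = (\<Sum>i\<le>n. Z i \<omega>)"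
      unfolding lessThan_Suc_atMost by (rule sum.cong) auto
    then show "(\<lambda>x. exp (\<theta> * (\<Sum>i<Suc n. snd (x i)) powr \<alpha>)) (?g \<omega>) = exp (\<theta> * (\<Sum>i\<le>n. Z i \<omega>) powr \<alpha>)"
      by simp
  qed
  ultimately show ?thesis by (simp only:)
qed

lemma rect_eq:
  assumes M1: "M1_setting P Y Z K"
    and Fm: "F \<in> borel_measurable (past_alg P Y Z (Suc n))"
    and Fi: "integrable P F" and Fpos: "\<And>\<omega>. 0 \<le> F \<omega>"
    and b: "b \<in> sets (borel :: real measure)"
  shows "(\<integral>\<^sup>+\<omega>. ennreal (F \<omega>) * indicator {\<omega>\<in>space P. Y (Suc n) \<omega> = y \<and> Z (Suc n) \<omega> \<in> b} \<omega> \<partial>P)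
       = (\<integral>\<^sup>+\<omega>. ennreal (F \<omega>) * emeasure (K (Y n \<omega>)) ({y} \<times> b) \<partial>P)"
proof -
  note facts = M1_facts[OF M1]
  interpret prob_space P using facts by simp
  interpret S: sigma_finite_subalgebra P "past_alg P Y Z (Suc n)" by (rule past_subalg[OF M1])
  let ?A = "{\<omega>\<in>space P. Y (Suc n) \<omega> = y \<and> Z (Suc n) \<omega> \<in> b}"
  let ?I = "indicator ?A :: 'a \<Rightarrow> real"
  let ?G = "\<lambda>\<omega>. measure (K (Y n \<omega>)) ({y} \<times> b)"
  have FmP[measurable]: "F \<in> borel_measurable P"
    by (rule measurable_from_subalg[OF S.subalg Fm])
  have Ym[measurable]: "\<And>k. Y k \<in> measurable P (count_space UNIV)" using facts by simp
  have Zm[measurable]: "\<And>k. Z k \<in> borel_measurable P" using facts by simp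
  have Asets[measurable]: "?A \<in> sets P"
  proof -
    have "?A = (Y (Suc n)) -` {y} \<inter> space P \<inter> ((Z (Suc n)) -` b \<inter> space P)" by auto
    then show ?thesis using b by (auto intro!: measurable_sets)
  qed
  have Im[measurable]: "?I \<in> borel_measurable P" using Asets by simp
  have Gm[measurable]: "?G \<in> borel_measurable P"
  proof -
    have "(\<lambda>u. measure (K u) ({y} \<times> b)) \<in> borel_measurable (count_space UNIV)" by simp
    then show ?thesis by (rule measurable_compose[OF facts(2)])
  qed
  have G01: "\<And>\<omega>. 0 \<le> ?G \<omega> \<and> ?G \<omega> \<le> 1"
    using facts(5) by (simp add: prob_space.prob_le_1)
  have int1: "integrable P (\<lambda>\<omega>. F \<omega> * ?I \<omega>)"
    by (rule Bochner_Integration.integrable_bound[OF Fi]) (auto simp: Fpos indicator_def)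
  have int2: "integrable P (\<lambda>\<omega>. F \<omega> * ?G \<omega>)"
    by (rule Bochner_Integration.integrable_bound[OF Fi]) (use G01 Fpos in \<open>auto intro!: AE_I2 mult_left_le\<close>)
  have ae: "AE \<omega> in P. real_cond_exp P (past_alg P Y Z (Suc n)) ?I \<omega> = ?G \<omega>"
    using facts(7)[of "Suc n" b y] b by simp
  have "(\<integral>\<^sup>+\<omega>. ennreal (F \<omega>) * indicator ?A \<omega> \<partial>P) = (\<integral>\<^sup>+\<omega>. ennreal (F \<omega> * ?I \<omega>) \<partial>P)"
    by (intro nn_integral_cong) (auto simp: indicator_def)
  also have "\<dots> = ennreal (\<integral>\<omega>. F \<omega> * ?I \<omega> \<partial>P)"
    by (rule nn_integral_eq_integral[OF int1]) (auto simp: Fpos)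
  also have "(\<integral>\<omega>. F \<omega> * ?I \<omega> \<partial>P) = (\<integral>\<omega>. F \<omega> * real_cond_exp P (past_alg P Y Z (Suc n)) ?I \<omega> \<partial>P)"
    by (rule S.real_cond_exp_intg(2)[OF int1 Fm Im, symmetric])
  also have "\<dots> = (\<integral>\<omega>. F \<omega> * ?G \<omega> \<partial>P)"
    by (rule integral_cong_AE) (use ae in auto)
  also have "ennreal \<dots> = (\<integral>\<^sup>+\<omega>. ennreal (F \<omega> * ?G \<omega>) \<partial>P)"
    by (rule nn_integral_eq_integral[OF int2, symmetric]) (use G01 Fpos in auto)
  also have "\<dots> = (\<integral>\<^sup>+\<omega>. ennreal (F \<omega>) * emeasure (K (Y n \<omega>)) ({y} \<times> b) \<partial>P)"
    by (intro nn_integral_cong) (simp add: ennreal_mult Fpos G01 finite_measure.emeasure_eq_measure[OF prob_space.axioms(1)[OF facts(5)]])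
  finally show ?thesis .
qed

lemma step_eq:
  fixes Y :: "nat \<Rightarrow> 'a \<Rightarrow> 's::countable"
  assumes M1: "M1_setting P Y Z K"
    and Fm: "F \<in> borel_measurable (past_alg P Y Z (Suc n))"
    and Fi: "integrable P F" and Fpos: "\<And>\<omega>. 0 \<le> F \<omega>"
    and hm: "h \<in> borel_measurable (count_space UNIV \<Otimes>\<^sub>M (borel :: real measure))"
  shows "(\<integral>\<^sup>+\<omega>. ennreal (F \<omega>) * h (Y (Suc n) \<omega>, Z (Suc n) \<omega>) \<partial>P)
       = (\<integral>\<^sup>+\<omega>. ennreal (F \<omega>) * (\<integral>\<^sup>+x. h x \<partial>K (Y n \<omega>)) \<partial>P)"
proof -
  note facts = M1_facts[OF M1]
  interpret prob_space P using facts by simp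
  interpret S: sigma_finite_subalgebra P "past_alg P Y Z (Suc n)" by (rule past_subalg[OF M1])
  let ?N = "count_space UNIV \<Otimes>\<^sub>M (borel :: real measure)"
  have FmP[measurable]: "F \<in> borel_measurable P"
    by (rule measurable_from_subalg[OF S.subalg Fm])
  have Ym[measurable]: "\<And>k. Y k \<in> measurable P (count_space UNIV)" using facts by simp
  have Zm[measurable]: "\<And>k. Z k \<in> borel_measurable P" using facts by simp
  define D where "D = density P (\<lambda>\<omega>. ennreal (F \<omega>))"
  have sD: "sets D = sets P" "space D = space P" unfolding D_def by auto
  have Dne: "space D \<noteq> {}" using sD not_empty by simp
  have YZm: "(\<lambda>\<omega>. (Y (Suc n) \<omega>, Z (Suc n) \<omega>)) \<in> measurable D ?N"
    unfolding D_def by (simp add: measurable_Pair)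
  have Km0: "K \<in> measurable (count_space UNIV) (subprob_algebra ?N)"
    using facts(5,6) by (auto simp: space_subprob_algebra prob_space_imp_subprob_space)
  have Km: "(\<lambda>\<omega>. K (Y n \<omega>)) \<in> measurable D (subprob_algebra ?N)"
    unfolding D_def by (rule measurable_compose[OF _ Km0]) simp
  define \<mu>1 where "\<mu>1 = distr D ?N (\<lambda>\<omega>. (Y (Suc n) \<omega>, Z (Suc n) \<omega>))"
  define \<mu>2 where "\<mu>2 = D \<bind> (\<lambda>\<omega>. K (Y n \<omega>))"
  have s1: "sets \<mu>1 = sets ?N" unfolding \<mu>1_def by simp
  have s2: "sets \<mu>2 = sets ?N" unfolding \<mu>2_def
    by (rule sets_bind[OF _ Dne]) (use facts(6) in simp)
  have e1: "emeasure \<mu>1 X = (\<integral>\<^sup>+\<omega>. ennreal (F \<omega>) * indicator {\<omega>\<in>space P. (Y (Suc n) \<omega>, Z (Suc n) \<omega>) \<in> X} \<omega> \<partial>P)"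
    if X: "X \<in> sets ?N" for X
  proof -
    have "emeasure \<mu>1 X = emeasure D ((\<lambda>\<omega>. (Y (Suc n) \<omega>, Z (Suc n) \<omega>)) -` X \<inter> space D)"
      unfolding \<mu>1_def by (rule emeasure_distr[OF YZm X])
    also have "\<dots> = (\<integral>\<^sup>+\<omega>\<in>((\<lambda>\<omega>. (Y (Suc n) \<omega>, Z (Suc n) \<omega>)) -` X \<inter> space P). ennreal (F \<omega>) \<partial>P)"
    proof -
      have "(\<lambda>\<omega>. (Y (Suc n) \<omega>, Z (Suc n) \<omega>)) -` X \<inter> space P \<in> sets P"
        using measurable_sets[OF YZm X] sD by simp
      then show ?thesis unfolding D_def by (subst emeasure_density) auto
    qed
    also have "\<dots> = (\<integral>\<^sup>+\<omega>. ennreal (F \<omega>) * indicator {\<omega>\<in>space P. (Y (Suc n) \<omega>, Z (Suc n) \<omega>) \<in> X} \<omega> \<partial>P)"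
      by (intro nn_integral_cong) (auto simp: indicator_def)
    finally show ?thesis .
  qed
  have e2: "emeasure \<mu>2 X = (\<integral>\<^sup>+\<omega>. ennreal (F \<omega>) * emeasure (K (Y n \<omega>)) X \<partial>P)"
    if X: "X \<in> sets ?N" for X
  proof -
    have "emeasure \<mu>2 X = (\<integral>\<^sup>+\<omega>. emeasure (K (Y n \<omega>)) X \<partial>D)"
      unfolding \<mu>2_def by (rule emeasure_bind[OF Dne Km X])
    also have "\<dots> = (\<integral>\<^sup>+\<omega>. ennreal (F \<omega>) * emeasure (K (Y n \<omega>)) X \<partial>P)"
      unfolding D_def
    proof (rule nn_integral_density)
      show "(\<lambda>\<omega>. emeasure (K (Y n \<omega>)) X) \<in> borel_measurable P"
        using measurable_emeasure_subprob_algebra[OF X] Km unfolding D_def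
        by (auto intro: measurable_compose simp: measurable_cong_sets[OF sets_density refl])
    qed simp
    finally show ?thesis .
  qed
  have eq: "\<mu>1 = \<mu>2"
  proof (rule measure_eqI_generator_eq[where E="{a \<times> b | a b. a \<in> sets (count_space UNIV) \<and> b \<in> sets (borel :: real measure)}"
        and \<Omega>=UNIV and A="\<lambda>_. UNIV"])
    show "Int_stable {a \<times> b | a b. a \<in> sets (count_space UNIV) \<and> b \<in> sets (borel :: real measure)}"
      by (rule Int_stable_pair_measure_generator)
    show "{a \<times> b | a b. a \<in> sets (count_space UNIV) \<and> b \<in> sets (borel :: real measure)} \<subseteq> Pow UNIV" by simp
    show "sets \<mu>1 = sigma_sets UNIV {a \<times> b | a b. a \<in> sets (count_space UNIV) \<and> b \<in> sets (borel :: real measure)}"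
      unfolding s1 sets_pair_measure by simp
    show "sets \<mu>2 = sigma_sets UNIV {a \<times> b | a b. a \<in> sets (count_space UNIV) \<and> b \<in> sets (borel :: real measure)}"
      unfolding s2 sets_pair_measure by simp
    show "range (\<lambda>_. UNIV) \<subseteq> {a \<times> b | a b. a \<in> sets (count_space UNIV) \<and> b \<in> sets (borel :: real measure)}"
      by (auto intro!: exI[of _ UNIV])
    show "(\<Union>i. UNIV) = UNIV" by simp
    show "emeasure \<mu>1 UNIV \<noteq> \<infinity>" for i :: nat
    proof -
      have "emeasure \<mu>1 UNIV = (\<integral>\<^sup>+\<omega>. ennreal (F \<omega>) * indicator {\<omega>\<in>space P. (Y (Suc n) \<omega>, Z (Suc n) \<omega>) \<in> UNIV} \<omega> \<partial>P)"
        by (rule e1) (metis sets.top space_pair_measure space_count_space space_borel UNIV_Times_UNIV)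
      also have "\<dots> = (\<integral>\<^sup>+\<omega>. ennreal (F \<omega>) \<partial>P)"
        by (intro nn_integral_cong) simp
      also have "\<dots> < \<infinity>" using Fi by (simp add: nn_integral_eq_integral Fpos)
      finally show ?thesis by simp
    qed
    fix X assume "X \<in> {a \<times> b | a b. a \<in> sets (count_space (UNIV::'s set)) \<and> b \<in> sets (borel :: real measure)}"
    then obtain a b where X: "X = a \<times> b" and b: "b \<in> sets (borel :: real measure)" by auto
    have Xu: "X = (\<Union>y\<in>a. {y} \<times> b)" unfolding X by auto
    have ys: "\<And>y. {y} \<times> b \<in> sets ?N" using b by auto
    have dj: "disjoint_family_on (\<lambda>y. {y} \<times> b) a" by (auto simp: disjoint_family_on_def)
    have "emeasure \<mu>1 X = (\<integral>\<^sup>+y. emeasure \<mu>1 ({y} \<times> b) \<partial>count_space a)"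
      unfolding Xu by (rule emeasure_UN_countable) (use ys dj s1 in auto)
    also have "\<dots> = (\<integral>\<^sup>+y. emeasure \<mu>2 ({y} \<times> b) \<partial>count_space a)"
    proof (intro nn_integral_cong)
      fix y
      have "emeasure \<mu>1 ({y} \<times> b) = (\<integral>\<^sup>+\<omega>. ennreal (F \<omega>) * indicator {\<omega>\<in>space P. Y (Suc n) \<omega> = y \<and> Z (Suc n) \<omega> \<in> b} \<omega> \<partial>P)"
        using e1[OF ys[of y]] by simp
      also have "\<dots> = (\<integral>\<^sup>+\<omega>. ennreal (F \<omega>) * emeasure (K (Y n \<omega>)) ({y} \<times> b) \<partial>P)"
        by (rule rect_eq[OF M1 Fm Fi Fpos b])
      also have "\<dots> = emeasure \<mu>2 ({y} \<times> b)" using e2[OF ys[of y]] by simp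
      finally show "emeasure \<mu>1 ({y} \<times> b) = emeasure \<mu>2 ({y} \<times> b)" .
    qed
    also have "\<dots> = emeasure \<mu>2 X"
      unfolding Xu by (rule emeasure_UN_countable[symmetric]) (use ys dj s2 in auto)
    finally show "emeasure \<mu>1 X = emeasure \<mu>2 X" .
  qed
  have "(\<integral>\<^sup>+\<omega>. ennreal (F \<omega>) * h (Y (Suc n) \<omega>, Z (Suc n) \<omega>) \<partial>P) = (\<integral>\<^sup>+\<omega>. h (Y (Suc n) \<omega>, Z (Suc n) \<omega>) \<partial>D)"
    unfolding D_def by (rule nn_integral_density[symmetric]) (use hm in simp_all)
  also have "\<dots> = (\<integral>\<^sup>+x. h x \<partial>\<mu>1)"
    unfolding \<mu>1_def by (rule nn_integral_distr[symmetric, OF YZm]) (use hm in simp)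
  also have "\<dots> = (\<integral>\<^sup>+x. h x \<partial>\<mu>2)" by (simp add: eq)
  also have "\<dots> = (\<integral>\<^sup>+\<omega>. (\<integral>\<^sup>+x. h x \<partial>K (Y n \<omega>)) \<partial>D)"
    unfolding \<mu>2_def by (rule nn_integral_bind[OF hm Km])
  also have "\<dots> = (\<integral>\<^sup>+\<omega>. ennreal (F \<omega>) * (\<integral>\<^sup>+x. h x \<partial>K (Y n \<omega>)) \<partial>P)"
    unfolding D_def
  proof (rule nn_integral_density)
    show "(\<lambda>\<omega>. \<integral>\<^sup>+x. h x \<partial>K (Y n \<omega>)) \<in> borel_measurable P"
      using nn_integral_measurable_subprob_algebra[OF hm] Km unfolding D_def
      by (auto intro: measurable_compose simp: measurable_cong_sets[OF sets_density refl])
  qed simp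
  finally show ?thesis .
qed

lemma part1:
  fixes Y :: "nat \<Rightarrow> 'a \<Rightarrow> 's::countable" and \<theta> \<alpha> :: real
  assumes M1: "M1_setting P Y Z K" and E: "E0 P Z \<theta> \<alpha> < \<infinity>" and Ms: "Msup K \<theta> \<alpha> < \<infinity>"
    and a: "0 < \<alpha>" "\<alpha> \<le> 1" and th: "0 < \<theta>"
  shows "(\<integral>\<^sup>+ \<omega>. ennreal (exp (\<theta> * (\<Sum>i\<le>k. Z i \<omega>) powr \<alpha>)) \<partial>P) \<le> Msup K \<theta> \<alpha> ^ k * E0 P Z \<theta> \<alpha>"
proof (induction k)
  case 0
  then show ?case by (simp add: E0_def)
next
  case (Suc n)
  note facts = M1_facts[OF M1]
  interpret prob_space P using facts by simp
  interpret S: sigma_finite_subalgebra P "past_alg P Y Z (Suc n)" by (rule past_subalg[OF M1])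
  define F where "F = (\<lambda>\<omega>. exp (\<theta> * (\<Sum>i\<le>n. Z i \<omega>) powr \<alpha>))"
  let ?N = "count_space UNIV \<Otimes>\<^sub>M (borel :: real measure)"
  define h :: "'s \<times> real \<Rightarrow> ennreal" where "h = (\<lambda>x. ennreal (exp (\<theta> * snd x powr \<alpha>)))"
  have Fm: "F \<in> borel_measurable (past_alg P Y Z (Suc n))" unfolding F_def by (rule F_past_meas[OF M1])
  have FmP: "F \<in> borel_measurable P"
    by (rule measurable_from_subalg[OF S.subalg Fm])
  have Fpos: "\<And>\<omega>. 0 \<le> F \<omega>" unfolding F_def by simp
  have IH: "(\<integral>\<^sup>+\<omega>. ennreal (F \<omega>) \<partial>P) \<le> Msup K \<theta> \<alpha> ^ n * E0 P Z \<theta> \<alpha>" using Suc.IH unfolding F_def .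
  also have "\<dots> < \<infinity>" using E Ms by (simp add: ennreal_mult_less_top power_less_top_ennreal)
  finally have Ffin: "(\<integral>\<^sup>+\<omega>. ennreal (F \<omega>) \<partial>P) < \<infinity>" .
  have Fi: "integrable P F" by (rule integrableI_nonneg[OF FmP]) (use Fpos Ffin in auto)
  have hm: "h \<in> borel_measurable ?N" unfolding h_def by measurable
  have "(\<integral>\<^sup>+ \<omega>. ennreal (exp (\<theta> * (\<Sum>i\<le>Suc n. Z i \<omega>) powr \<alpha>)) \<partial>P)
      \<le> (\<integral>\<^sup>+\<omega>. ennreal (F \<omega>) * h (Y (Suc n) \<omega>, Z (Suc n) \<omega>) \<partial>P)"
  proof (rule nn_integral_mono)
    fix \<omega> assume w: "\<omega> \<in> space P"
    have z: "0 \<le> (\<Sum>i\<le>n. Z i \<omega>)" "0 \<le> Z (Suc n) \<omega>" using facts(4)[OF w] by (auto intro: sum_nonneg)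
    have "(\<Sum>i\<le>Suc n. Z i \<omega>) powr \<alpha> \<le> (\<Sum>i\<le>n. Z i \<omega>) powr \<alpha> + Z (Suc n) \<omega> powr \<alpha>"
      using powr_subadd[OF z a] by simp
    then have "exp (\<theta> * (\<Sum>i\<le>Suc n. Z i \<omega>) powr \<alpha>) \<le> F \<omega> * exp (\<theta> * Z (Suc n) \<omega> powr \<alpha>)"
      using th unfolding F_def
      by (simp add: exp_add[symmetric] distrib_left[symmetric] del: distrib_left)
    then show "ennreal (exp (\<theta> * (\<Sum>i\<le>Suc n. Z i \<omega>) powr \<alpha>)) \<le> ennreal (F \<omega>) * h (Y (Suc n) \<omega>, Z (Suc n) \<omega>)"
      unfolding h_def by (simp add: ennreal_mult[symmetric] Fpos)
  qed
  also have "\<dots> = (\<integral>\<^sup>+\<omega>. ennreal (F \<omega>) * (\<integral>\<^sup>+x. h x \<partial>K (Y n \<omega>)) \<partial>P)"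
    by (rule step_eq[OF M1 Fm Fi Fpos hm])
  also have "\<dots> \<le> (\<integral>\<^sup>+\<omega>. ennreal (F \<omega>) * Msup K \<theta> \<alpha> \<partial>P)"
  proof (rule nn_integral_mono)
    fix \<omega>
    have "(\<integral>\<^sup>+x. h x \<partial>K (Y n \<omega>)) \<le> Msup K \<theta> \<alpha>"
      unfolding Msup_def h_def by (rule SUP_upper) simp
    then show "ennreal (F \<omega>) * (\<integral>\<^sup>+x. h x \<partial>K (Y n \<omega>)) \<le> ennreal (F \<omega>) * Msup K \<theta> \<alpha>"
      by (rule mult_left_mono) simp
  qed
  also have "\<dots> = Msup K \<theta> \<alpha> * (\<integral>\<^sup>+\<omega>. ennreal (F \<omega>) \<partial>P)"
    by (subst nn_integral_multc) (use FmP in \<open>auto simp: mult.commute\<close>)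
  also have "\<dots> \<le> Msup K \<theta> \<alpha> * (Msup K \<theta> \<alpha> ^ n * E0 P Z \<theta> \<alpha>)"
    by (rule mult_left_mono[OF IH]) simp
  finally show ?case by (simp add: mult.assoc)
qed

lemma part2:
  fixes Y :: "nat \<Rightarrow> 'a \<Rightarrow> 's::countable" and \<theta> \<alpha> :: real
  assumes M1: "M1_setting P Y Z K" and E: "E0 P Z \<theta> \<alpha> = e" "e < \<infinity>" and Ms: "Msup K \<theta> \<alpha> = m" "m < \<infinity>"
    and a: "0 < \<alpha>" "\<alpha> \<le> 1" and th: "0 < \<theta>"
    and L: "L = ln (max 1 (enn2real m)) + ln (max 1 (enn2real e)) + 1"
    and C: "C = (L / \<theta>) powr (1 / \<alpha>)"
  shows "measure P {\<omega>\<in>space P. (\<Sum>i\<le>k. Z i \<omega>) > C * real k powr (1 / \<alpha>)} \<le> exp (- 1 * real k)"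
proof -
  note facts = M1_facts[OF M1]
  interpret prob_space P using facts by simp
  have Zm[measurable]: "\<And>k. Z k \<in> borel_measurable P" using facts by simp
  let ?A = "{\<omega>\<in>space P. (\<Sum>i\<le>k. Z i \<omega>) > C * real k powr (1 / \<alpha>)}"
  define m' where "m' = enn2real m"
  define e' where "e' = enn2real e"
  have mm: "m = ennreal m'" "0 \<le> m'" using Ms unfolding m'_def by (auto simp: less_top)
  have ee: "e = ennreal e'" "0 \<le> e'" using E unfolding e'_def by (auto simp: less_top)
  have L1: "1 \<le> L" unfolding L by simp
  show ?thesis
  proof (cases "k = 0")
    case True then show ?thesis by simp
  next
    case False
    then have k1: "1 \<le> real k" by simp
    have Asets: "?A \<in> sets P" by measurable
    have pw: "(C * real k powr (1 / \<alpha>)) powr \<alpha> = L / \<theta> * real k"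
      using a th L1 unfolding C by (simp add: powr_mult powr_powr)
    have ptw: "ennreal (exp (L * real k)) * indicator ?A \<omega> \<le> ennreal (exp (\<theta> * (\<Sum>i\<le>k. Z i \<omega>) powr \<alpha>))" for \<omega>
    proof (cases "\<omega> \<in> ?A")
      case True
      then have w: "C * real k powr (1 / \<alpha>) < (\<Sum>i\<le>k. Z i \<omega>)" by simp
      have "0 \<le> C * real k powr (1 / \<alpha>)" unfolding C by simp
      then have "(C * real k powr (1 / \<alpha>)) powr \<alpha> < (\<Sum>i\<le>k. Z i \<omega>) powr \<alpha>"
        using w a by (intro powr_less_mono2) auto
      then have "L / \<theta> * real k < (\<Sum>i\<le>k. Z i \<omega>) powr \<alpha>" using pw by simp
      then have "L * real k < \<theta> * (\<Sum>i\<le>k. Z i \<omega>) powr \<alpha>" using th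
        by (simp add: field_simps)
      then show ?thesis using True by simp
    qed simp
    have "ennreal (exp (L * real k)) * emeasure P ?A = (\<integral>\<^sup>+\<omega>. ennreal (exp (L * real k)) * indicator ?A \<omega> \<partial>P)"
      using Asets by (simp add: nn_integral_cmult_indicator)
    also have "\<dots> \<le> (\<integral>\<^sup>+ \<omega>. ennreal (exp (\<theta> * (\<Sum>i\<le>k. Z i \<omega>) powr \<alpha>)) \<partial>P)"
      by (intro nn_integral_mono ptw)
    also have "\<dots> \<le> m ^ k * e" using part1[OF M1 _ _ a th, of k] E Ms by simp
    also have "\<dots> = ennreal (m' ^ k * e')" using mm ee by (simp add: ennreal_mult ennreal_power)
    finally have "ennreal (exp (L * real k)) * ennreal (measure P ?A) \<le> ennreal (m' ^ k * e')"
      by (simp add: emeasure_eq_measure)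
    then have "exp (L * real k) * measure P ?A \<le> m' ^ k * e'"
      using mm ee by (simp add: ennreal_mult[symmetric])
    then have mA: "measure P ?A \<le> m' ^ k * e' / exp (L * real k)"
      by (simp add: field_simps)
    define lm where "lm = ln (max 1 m')"
    define le where "le = ln (max 1 e')"
    have lm0: "0 \<le> lm" "0 \<le> le" unfolding lm_def le_def by auto
    have "m' ^ k \<le> (max 1 m') ^ k" using mm by (intro power_mono) auto
    also have "\<dots> = exp (real k * lm)" unfolding lm_def by (simp add: exp_of_nat_mult)
    finally have h1: "m' ^ k \<le> exp (real k * lm)" .
    have "e' \<le> exp le" unfolding le_def by simp
    also have "\<dots> \<le> exp (real k * le)" using lm0 k1 by (simp add: mult_le_cancel_right1)
    finally have h2: "e' \<le> exp (real k * le)" .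
    have "m' ^ k * e' \<le> exp (real k * lm) * exp (real k * le)"
      using h1 h2 mm ee by (intro mult_mono) auto
    also have "\<dots> = exp (L * real k) * exp (- 1 * real k)"
      unfolding L lm_def le_def m'_def e'_def by (simp add: exp_add[symmetric] algebra_simps)
    finally have "m' ^ k * e' / exp (L * real k) \<le> exp (- 1 * real k)"
      by (simp add: field_simps)
    with mA show ?thesis by linarith
  qed
qed

theorem lemma6p3:
  fixes \<theta> \<alpha> :: real
  assumes "0 < \<alpha>" "\<alpha> \<le> 1" "0 < \<theta>"
  shows "(\<forall>(P :: 'a measure) (Y :: nat \<Rightarrow> 'a \<Rightarrow> 's::countable) Z K.
            M1_setting P Y Z K \<and> E0 P Z \<theta> \<alpha> < \<infinity> \<and> Msup K \<theta> \<alpha> < \<infinity> \<longrightarrow>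
            (\<forall>k. (\<integral>\<^sup>+ \<omega>. ennreal (exp (\<theta> * (\<Sum>i\<le>k. Z i \<omega>) powr \<alpha>)) \<partial>P)
                   \<le> Msup K \<theta> \<alpha> ^ k * E0 P Z \<theta> \<alpha>))
       \<and> (\<forall>e m. \<exists>C>0. \<exists>C'>0. \<forall>(P :: 'a measure) (Y :: nat \<Rightarrow> 'a \<Rightarrow> 's) Z K.
            M1_setting P Y Z K \<and> E0 P Z \<theta> \<alpha> = e \<and> Msup K \<theta> \<alpha> = m \<and> e < \<infinity> \<and> m < \<infinity> \<longrightarrow>
            (\<forall>k::nat. measure P {\<omega>\<in>space P. (\<Sum>i\<le>k. Z i \<omega>) > C * real k powr (1 / \<alpha>)}
                       \<le> exp (- C' * real k)))"
proof (intro conjI allI impI)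
  fix P :: "'a measure" and Y :: "nat \<Rightarrow> 'a \<Rightarrow> 's::countable" and Z K k
  assume h: "M1_setting P Y Z K \<and> E0 P Z \<theta> \<alpha> < \<infinity> \<and> Msup K \<theta> \<alpha> < \<infinity>"
  then show "(\<integral>\<^sup>+ \<omega>. ennreal (exp (\<theta> * (\<Sum>i\<le>k. Z i \<omega>) powr \<alpha>)) \<partial>P) \<le> Msup K \<theta> \<alpha> ^ k * E0 P Z \<theta> \<alpha>"
    using part1[of P Y Z K \<theta> \<alpha> k] assms by blast
next
  fix e m :: ennreal
  define L where "L = ln (max 1 (enn2real m)) + ln (max 1 (enn2real e)) + 1"
  define C where "C = (L / \<theta>) powr (1 / \<alpha>)"
  have L1: "1 \<le> L" unfolding L_def by simp
  have Cpos: "C > 0" unfolding C_def using L1 assms by simp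
  show "\<exists>C>0. \<exists>C'>0. \<forall>(P :: 'a measure) (Y :: nat \<Rightarrow> 'a \<Rightarrow> 's) Z K.
            M1_setting P Y Z K \<and> E0 P Z \<theta> \<alpha> = e \<and> Msup K \<theta> \<alpha> = m \<and> e < \<infinity> \<and> m < \<infinity> \<longrightarrow>
            (\<forall>k::nat. measure P {\<omega>\<in>space P. (\<Sum>i\<le>k. Z i \<omega>) > C * real k powr (1 / \<alpha>)}
                       \<le> exp (- C' * real k))"
  proof (rule exI[of _ C], intro conjI Cpos, rule exI[of _ "1::real"], intro conjI allI impI)
    fix P :: "'a measure" and Y :: "nat \<Rightarrow> 'a \<Rightarrow> 's" and Z K k
    assume "M1_setting P Y Z K \<and> E0 P Z \<theta> \<alpha> = e \<and> Msup K \<theta> \<alpha> = m \<and> e < \<infinity> \<and> m < \<infinity>"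
    then show "measure P {\<omega>\<in>space P. (\<Sum>i\<le>k. Z i \<omega>) > C * real k powr (1 / \<alpha>)} \<le> exp (- 1 * real k)"
      by (intro part2[where L=L and C=C, OF _ _ _ _ _ assms L_def C_def]) auto
  qed simp
qed

end
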